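(* Let $N\ge 2$ be an integer and let $\boldsymbol{A}=(A_1,\dots,A_N)$ and $\boldsymbol{B}=(B_1,\dots,B_N)$ be probability vectors, i.e. $A_i\ge 0$, $B_i\ge 0$ for all $i$ and $\sum_{i=1}^N A_i=\sum_{i=1}^N B_i=1$. For $i=1,\dots,N$ put $S_i=A_i+B_i$. Suppose $S_i\le 1$ for all $i=1,\dots,N$. Then $L_{\min}=0$; that is, there exists a joint selection probability matrix $\boldsymbol{P}=(p_{i,j})_{i,j=1}^N$ with $$L(\boldsymbol{P})=\sum_{i=1}^N\Big(\sum_{j=1}^N p_{i,j}-A_i\Big)^2+\sum_{j=1}^N\Big(\sum_{i=1}^N p_{i,j}-B_j\Big)^2=0,$$ i.e. with $\sum_j p_{i,j}=A_i$ for all $i$ and $\sum_i p_{i,j}=B_j$ for all $j$.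
   Context: A joint selection probability matrix is an $N\times N$ real matrix $\boldsymbol{P}=(p_{i,j})$ with $p_{i,i}=0$ for all $i$, $p_{i,j}\ge 0$ for all $i,j$, and $\sum_{i,j}p_{i,j}=1$ (entry $p_{i,j}$ is the probability that player A selects arm $i$ and player B selects arm $j$). The satisfied preferences are $\pi_A(i)=\sum_j p_{i,j}$ and $\pi_B(j)=\sum_i p_{i,j}$, the loss is $L=\sum_i(\pi_A(i)-A_i)^2+\sum_j(\pi_B(j)-B_j)^2$, and $L_{\min}$ is the minimum of $L$ over all joint selection probability matrices. $S_i=A_i+B_i$ is called the popularity of arm $i$. *)

theory Defs
  imports Complex_Main
begin

text \<open>Arms are indexed by 1..N; vectors/matrices are functions on nat with that index range.\<close>

definition prob_vector :: "nat \<Rightarrow> (nat \<Rightarrow> real) \<Rightarrow> bool" where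
  "prob_vector N A \<longleftrightarrow> (\<forall>i\<in>{1..N}. A i \<ge> 0) \<and> (\<Sum>i=1..N. A i) = 1"

definition joint_sel_matrix :: "nat \<Rightarrow> (nat \<Rightarrow> nat \<Rightarrow> real) \<Rightarrow> bool" where
  "joint_sel_matrix N P \<longleftrightarrow>
     (\<forall>i\<in>{1..N}. P i i = 0) \<and> (\<forall>i\<in>{1..N}. \<forall>j\<in>{1..N}. P i j \<ge> 0) \<and>
     (\<Sum>i=1..N. \<Sum>j=1..N. P i j) = 1"

definition piA :: "nat \<Rightarrow> (nat \<Rightarrow> nat \<Rightarrow> real) \<Rightarrow> nat \<Rightarrow> real" where
  "piA N P i = (\<Sum>j=1..N. P i j)"

definition piB :: "nat \<Rightarrow> (nat \<Rightarrow> nat \<Rightarrow> real) \<Rightarrow> nat \<Rightarrow> real" where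
  "piB N P j = (\<Sum>i=1..N. P i j)"

definition loss :: "nat \<Rightarrow> (nat \<Rightarrow> real) \<Rightarrow> (nat \<Rightarrow> real) \<Rightarrow> (nat \<Rightarrow> nat \<Rightarrow> real) \<Rightarrow> real" where
  "loss N A B P = (\<Sum>i=1..N. (piA N P i - A i)^2) + (\<Sum>j=1..N. (piB N P j - B j)^2)"

definition L_min :: "nat \<Rightarrow> (nat \<Rightarrow> real) \<Rightarrow> (nat \<Rightarrow> real) \<Rightarrow> real" where
  "L_min N A B = Inf (loss N A B ` {P. joint_sel_matrix N P})"

end

theory Submission imports Defs begin
lemma three:
  fixes a b :: "nat \<Rightarrow> real"
  assumes nn: "\<forall>h\<in>{1,2,3}. a h \<ge> 0 \<and> b h \<ge> 0 \<and> a h + b h \<le> 1"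
    and sa: "a 1 + a 2 + a 3 = 1" and sb: "b 1 + b 2 + b 3 = 1"
  shows "\<exists>Q. (\<forall>h. Q h h = 0) \<and> (\<forall>h l. Q h l \<ge> 0) \<and>
     (\<forall>h\<in>{1,2,3}. (\<Sum>l\<in>{1,2,3}. Q h l) = a h) \<and> (\<forall>l\<in>{1,2,3}. (\<Sum>h\<in>{1,2,3}. Q h l) = b l)"
proof -
  define x where "x = max (max 0 (a 1 - b 3)) (a 1 + a 2 - b 1 - b 3)"
  define Q :: "nat \<Rightarrow> nat \<Rightarrow> real" where "Q h l =
    (if h = 1 \<and> l = 2 then x else if h = 1 \<and> l = 3 then a 1 - x
     else if h = 2 \<and> l = 3 then b 3 - a 1 + x else if h = 2 \<and> l = 1 then a 1 + a 2 - b 3 - x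
     else if h = 3 \<and> l = 1 then b 1 - a 2 + b 3 - a 1 + x else if h = 3 \<and> l = 2 then b 2 - x else 0)" for h l
  have n: "a 1 \<ge> 0" "a 2 \<ge> 0" "a 3 \<ge> 0" "b 1 \<ge> 0" "b 2 \<ge> 0" "b 3 \<ge> 0"
    "a 1 + b 1 \<le> 1" "a 2 + b 2 \<le> 1" "a 3 + b 3 \<le> 1" using nn by auto
  have "\<forall>h l. Q h l \<ge> 0" unfolding Q_def x_def using n sa sb by auto
  moreover have "\<forall>h. Q h h = 0" unfolding Q_def by auto
  moreover have "\<forall>h\<in>{1,2,3}. (\<Sum>l\<in>{1,2,3}. Q h l) = a h" unfolding Q_def using sa sb by auto
  moreover have "\<forall>l\<in>{1,2,3}. (\<Sum>h\<in>{1,2,3}. Q h l) = b l" unfolding Q_def using sa sb by auto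
  ultimately show ?thesis by blast
qed

lemma group_row:
  fixes I :: "'a set" and H :: "nat set" and g :: "'a \<Rightarrow> nat" and A B :: "'a \<Rightarrow> real"
    and Q :: "nat \<Rightarrow> nat \<Rightarrow> real"
  assumes fI: "finite I" and fH: "finite H" and gH: "g ` I \<subseteq> H"
    and An: "\<forall>i\<in>I. A i \<ge> 0" and Bn: "\<forall>i\<in>I. B i \<ge> 0"
    and Qn: "\<forall>h l. Q h l \<ge> 0"
    and row: "\<forall>h\<in>H. (\<Sum>l\<in>H. Q h l) = (\<Sum>i\<in>{i\<in>I. g i = h}. A i)"
    and col: "\<forall>l\<in>H. (\<Sum>h\<in>H. Q h l) = (\<Sum>i\<in>{i\<in>I. g i = l}. B i)"
    and i: "i \<in> I"
  shows "(\<Sum>j\<in>I. Q (g i) (g j) * (A i / (\<Sum>k\<in>{k\<in>I. g k = g i}. A k))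
            * (B j / (\<Sum>k\<in>{k\<in>I. g k = g j}. B k))) = A i"
proof -
  define GA where "GA h = (\<Sum>k\<in>{k\<in>I. g k = h}. A k)" for h
  define GB where "GB h = (\<Sum>k\<in>{k\<in>I. g k = h}. B k)" for h
  have gi: "g i \<in> H" using gH i by auto
  have inner: "(\<Sum>j\<in>I. Q (g i) (g j) * (B j / GB (g j))) = GA (g i)"
  proof -
    have "(\<Sum>j\<in>I. Q (g i) (g j) * (B j / GB (g j)))
        = (\<Sum>l\<in>H. \<Sum>j\<in>{j\<in>I. g j = l}. Q (g i) (g j) * (B j / GB (g j)))"
      by (rule sum.group[OF fI fH gH, symmetric])
    also have "\<dots> = (\<Sum>l\<in>H. \<Sum>j\<in>{j\<in>I. g j = l}. Q (g i) l * B j / GB l)"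
      by (intro sum.cong refl) auto
    also have "\<dots> = (\<Sum>l\<in>H. Q (g i) l * GB l / GB l)"
      unfolding GB_def by (intro sum.cong refl) (simp add: sum_distrib_left sum_divide_distrib)
    also have "\<dots> = (\<Sum>l\<in>H. Q (g i) l)"
    proof (intro sum.cong refl)
      fix l assume l: "l \<in> H"
      show "Q (g i) l * GB l / GB l = Q (g i) l"
      proof (cases "GB l = 0")
        case True
        have "(\<Sum>h\<in>H. Q h l) = 0" using col l True unfolding GB_def by simp
        then have "\<forall>h\<in>H. Q h l = 0" using fH Qn by (simp add: sum_nonneg_eq_0_iff)
        then show ?thesis using gi by auto
      qed simp
    qed
    also have "\<dots> = GA (g i)" using row gi unfolding GA_def by simp
    finally show ?thesis .
  qed
  have "(\<Sum>j\<in>I. Q (g i) (g j) * (A i / GA (g i)) * (B j / GB (g j)))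
      = A i / GA (g i) * (\<Sum>j\<in>I. Q (g i) (g j) * (B j / GB (g j)))"
    by (simp add: sum_distrib_left mult_ac)
  also have "\<dots> = A i"
  proof (cases "GA (g i) = 0")
    case True
    have "A i \<le> GA (g i)" unfolding GA_def
      by (rule member_le_sum) (use i An fI in auto)
    then have "A i = 0" using True An i by auto
    then show ?thesis by simp
  next
    case False then show ?thesis using inner by simp
  qed
  finally show ?thesis unfolding GA_def GB_def .
qed

lemma group_col:
  fixes I :: "'a set" and H :: "nat set" and g :: "'a \<Rightarrow> nat" and A B :: "'a \<Rightarrow> real"
    and Q :: "nat \<Rightarrow> nat \<Rightarrow> real"
  assumes fI: "finite I" and fH: "finite H" and gH: "g ` I \<subseteq> H"
    and An: "\<forall>i\<in>I. A i \<ge> 0" and Bn: "\<forall>i\<in>I. B i \<ge> 0"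
    and Qn: "\<forall>h l. Q h l \<ge> 0"
    and row: "\<forall>h\<in>H. (\<Sum>l\<in>H. Q h l) = (\<Sum>i\<in>{i\<in>I. g i = h}. A i)"
    and col: "\<forall>l\<in>H. (\<Sum>h\<in>H. Q h l) = (\<Sum>i\<in>{i\<in>I. g i = l}. B i)"
    and j: "j \<in> I"
  shows "(\<Sum>i\<in>I. Q (g i) (g j) * (A i / (\<Sum>k\<in>{k\<in>I. g k = g i}. A k))
            * (B j / (\<Sum>k\<in>{k\<in>I. g k = g j}. B k))) = B j"
proof -
  have "(\<Sum>i\<in>I. (\<lambda>h l. Q l h) (g j) (g i) * (B j / (\<Sum>k\<in>{k\<in>I. g k = g j}. B k))
            * (A i / (\<Sum>k\<in>{k\<in>I. g k = g i}. A k))) = B j"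
    by (rule group_row[OF fI fH gH Bn An]) (use Qn row col j in auto)
  then show ?thesis by (simp add: mult_ac)
qed

lemma crossing: "P (0::nat) \<Longrightarrow> \<not> P n \<Longrightarrow> \<exists>k<n. P k \<and> \<not> P (Suc k)"
proof (induction n)
  case 0 then show ?case by simp
next
  case (Suc n) then show ?case
    by (cases "P n") (auto intro: less_SucI)
qed

theorem theorem2p1:
  fixes N :: nat and A B :: "nat \<Rightarrow> real"
  assumes "N \<ge> 2"
    and "prob_vector N A" and "prob_vector N B"
    and "\<forall>i\<in>{1..N}. A i + B i \<le> 1"
  shows "L_min N A B = 0 \<and>
         (\<exists>P. joint_sel_matrix N P \<and> loss N A B P = 0 \<and>
              (\<forall>i\<in>{1..N}. piA N P i = A i) \<and> (\<forall>j\<in>{1..N}. piB N P j = B j))"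
proof -
  define I where "I = {1..N}"
  define H :: "nat set" where "H = {1,2,3}"
  have An: "\<forall>i\<in>I. A i \<ge> 0" and sA: "(\<Sum>i\<in>I. A i) = 1"
    using assms(2) unfolding prob_vector_def I_def by auto
  have Bn: "\<forall>i\<in>I. B i \<ge> 0" and sB: "(\<Sum>i\<in>I. B i) = 1"
    using assms(3) unfolding prob_vector_def I_def by auto
  define c where "c k = (\<Sum>i=1..k. A i + B i)" for k
  have c0: "c 0 \<le> 1" unfolding c_def by simp
  have cN: "\<not> c N \<le> 1" using sA sB unfolding c_def I_def by (simp add: sum.distrib)
  obtain k where k: "k < N" "c k \<le> 1" "\<not> c (Suc k) \<le> 1"
    using crossing[of "\<lambda>k. c k \<le> 1", OF c0 cN] by blast
  define g :: "nat \<Rightarrow> nat" where "g i = (if i \<le> k then 1 else if i = Suc k then 2 else 3)" for i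
  have fI: "finite I" and fH: "finite H" unfolding I_def H_def by auto
  have gH: "g ` I \<subseteq> H" unfolding g_def H_def by auto
  define a where "a h = (\<Sum>i\<in>{i\<in>I. g i = h}. A i)" for h
  define b where "b h = (\<Sum>i\<in>{i\<in>I. g i = h}. B i)" for h
  have sa: "a 1 + a 2 + a 3 = 1"
  proof -
    have "(\<Sum>h\<in>H. a h) = 1" unfolding a_def using sum.group[OF fI fH gH, of A] sA by simp
    then show ?thesis unfolding H_def by simp
  qed
  have sb: "b 1 + b 2 + b 3 = 1"
  proof -
    have "(\<Sum>h\<in>H. b h) = 1" unfolding b_def using sum.group[OF fI fH gH, of B] sB by simp
    then show ?thesis unfolding H_def by simp
  qed
  have G1: "{i\<in>I. g i = 1} = {1..k}" using k unfolding I_def g_def by auto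
  have G2: "{i\<in>I. g i = 2} = {Suc k}" using k unfolding I_def g_def by auto
  have ab1: "a 1 + b 1 = c k" unfolding a_def b_def c_def G1 by (simp add: sum.distrib)
  have ab2: "a 2 + b 2 = A (Suc k) + B (Suc k)" unfolding a_def b_def G2 by simp
  have cS: "c (Suc k) = c k + A (Suc k) + B (Suc k)" unfolding c_def by simp
  have s2: "A (Suc k) + B (Suc k) \<le> 1" using assms(4) k by auto
  have an: "a h \<ge> 0" for h unfolding a_def using An by (auto intro: sum_nonneg)
  have bn: "b h \<ge> 0" for h unfolding b_def using Bn by (auto intro: sum_nonneg)
  have "\<forall>h\<in>{1,2,3}. a h \<ge> 0 \<and> b h \<ge> 0 \<and> a h + b h \<le> 1"
    using an bn ab1 ab2 cS s2 k sa sb by auto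
  then obtain Q where Q0: "\<forall>h. Q h h = 0" and Qn: "\<forall>h l. Q h l \<ge> 0"
    and Qr: "\<forall>h\<in>{1,2,3}. (\<Sum>l\<in>{1,2,3}. Q h l) = a h"
    and Qc: "\<forall>l\<in>{1,2,3}. (\<Sum>h\<in>{1,2,3}. Q h l) = b l"
    using three[OF _ sa sb] by blast
  have row: "\<forall>h\<in>H. (\<Sum>l\<in>H. Q h l) = (\<Sum>i\<in>{i\<in>I. g i = h}. A i)"
    using Qr unfolding H_def a_def by blast
  have col: "\<forall>l\<in>H. (\<Sum>h\<in>H. Q h l) = (\<Sum>i\<in>{i\<in>I. g i = l}. B i)"
    using Qc unfolding H_def b_def by blast
  define P where "P i j = Q (g i) (g j) * (A i / (\<Sum>k\<in>{k\<in>I. g k = g i}. A k))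
            * (B j / (\<Sum>k\<in>{k\<in>I. g k = g j}. B k))" for i j
  have pA: "\<forall>i\<in>{1..N}. piA N P i = A i"
    unfolding piA_def P_def I_def[symmetric]
    using group_row[OF fI fH gH An Bn Qn row col] by blast
  have pB: "\<forall>j\<in>{1..N}. piB N P j = B j"
    unfolding piB_def P_def I_def[symmetric]
    using group_col[OF fI fH gH An Bn Qn row col] by blast
  have J: "joint_sel_matrix N P"
  proof -
    have "\<forall>i\<in>{1..N}. P i i = 0" unfolding P_def using Q0 by simp
    moreover have "\<forall>i\<in>{1..N}. \<forall>j\<in>{1..N}. P i j \<ge> 0"
    proof (intro ballI)
      fix i j assume "i \<in> {1..N}" "j \<in> {1..N}"
      then have "A i \<ge> 0" "B j \<ge> 0" using An Bn unfolding I_def by auto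
      moreover have "(\<Sum>k\<in>{k\<in>I. g k = g i}. A k) \<ge> 0" using An by (auto intro: sum_nonneg)
      moreover have "(\<Sum>k\<in>{k\<in>I. g k = g j}. B k) \<ge> 0" using Bn by (auto intro: sum_nonneg)
      ultimately show "P i j \<ge> 0" unfolding P_def using Qn by simp
    qed
    moreover have "(\<Sum>i=1..N. \<Sum>j=1..N. P i j) = 1"
    proof -
      have "(\<Sum>i=1..N. \<Sum>j=1..N. P i j) = (\<Sum>i=1..N. A i)"
        using pA unfolding piA_def by simp
      then show ?thesis using sA unfolding I_def by simp
    qed
    ultimately show ?thesis unfolding joint_sel_matrix_def by blast
  qed
  have L0: "loss N A B P = 0" unfolding loss_def using pA pB by simp
  have "L_min N A B = 0" unfolding L_min_def
  proof (rule cInf_eq_minimum)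
    show "0 \<in> loss N A B ` {P. joint_sel_matrix N P}" using J L0 by force
  next
    fix x assume "x \<in> loss N A B ` {P. joint_sel_matrix N P}"
    then show "0 \<le> x" unfolding loss_def by (auto intro!: add_nonneg_nonneg sum_nonneg)
  qed
  then show ?thesis using J L0 pA pB by blast
qed

end
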